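(* If $\phi\in C(\mathbb{Z}_p,\mathbb{C}_p)$ and $x,y\in\mathbb{Z}_p$, then $$T^x(\phi)(y)=\int_{\mathbb{Z}_p}(\mathbf 1-\mathbf x)^{\star y}\,d\mu_{\phi,x}=\big((\mathbf 1-\mathbf x)^{\star y}\star\phi\big)(x).$$
   Context: Fix a prime $p$. $\mathbb{C}_p$ denotes the completion of an algebraic closure of $\mathbb{Q}_p$, with absolute value $|\cdot|$ normalized by $|p|=1/p$. $C(\mathbb{Z}_p,\mathbb{C}_p)$ is the $\mathbb{C}_p$-Banach space of continuous functions $\mathbb{Z}_p\to\mathbb{C}_p$ with the sup-norm $\|\cdot\|$. For $n\in\mathbb{Z}_{\ge0}$ and $x\in\mathbb{Z}_p$, $\binom{x}{n}=x(x-1)\cdots(x-n+1)/n!$. For $\phi$ let $(\nabla\phi)(x)=\phi(x+1)-\phi(x)$; every $\phi$ has the Mahler expansion $\phi(x)=\sum_{n\ge0}(\nabla^n\phi)(0)\binom{x}{n}$. The convolution $\phi\star\psi$ is the continuous function with Mahler coefficients $(\nabla^n(\phi\star\psi))(0)=\sum_{k=0}^n\binom nk(\nabla^k\phi)(0)(\nabla^{n-k}\psi)(0)$. For $y\in\mathbb{Z}_p$, $S^y(\phi)(x)=\sum_{k\ge0}(-1)^k k!\binom yk\binom xk\phi(x-k)$; for $x\in\mathbb{Z}_p$, $T^x(\phi)(y)=S^y(\phi)(x)$. $\mathbf 1$ is the constant function $1$, $\mathbf x$ is $x\mapsto x$, and $(\mathbf 1-\mathbf x)^{\star y}:=S^y(\mathbf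 1)$. A measure is a bounded $\mathbb{C}_p$-linear functional on $C(\mathbb{Z}_p,\mathbb{C}_p)$, its value on $\chi$ written $\int_{\mathbb{Z}_p}\chi\,d\mu$; for $\phi\in C(\mathbb{Z}_p,\mathbb{C}_p)$ and $x\in\mathbb{Z}_p$, $\mu_{\phi,x}$ is the measure with $\int_{\mathbb{Z}_p}\chi\,d\mu_{\phi,x}=\sum_{n\ge0}(\nabla^n\chi)(0)\binom{x}{n}\phi(x-n)$. *)

theory Defs
  imports "HOL-Computational_Algebra.Polynomial"
begin

text \<open>
  We model it abstractly: a field 'a of
  characteristic 0 together with a function av (the absolute value) such that
  (av) is a non-archimedean absolute value with av p = 1/p, 'a is complete,
  algebraically closed, and the algebraic numbers are dense.  These properties
  characterise C_p up to isometric isomorphism.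
\<close>

definition abs_value_na :: "('a::field_char_0 \<Rightarrow> real) \<Rightarrow> bool" where
  "abs_value_na av \<longleftrightarrow>
     (\<forall>x. av x \<ge> 0) \<and> (\<forall>x. av x = 0 \<longleftrightarrow> x = 0) \<and>
     (\<forall>x y. av (x * y) = av x * av y) \<and>
     (\<forall>x y. av (x + y) \<le> max (av x) (av y))"

definition cauchy_v :: "('a::field_char_0 \<Rightarrow> real) \<Rightarrow> (nat \<Rightarrow> 'a) \<Rightarrow> bool" where
  "cauchy_v av s \<longleftrightarrow> (\<forall>e>0. \<exists>N. \<forall>m\<ge>N. \<forall>n\<ge>N. av (s m - s n) < e)"

definition lim_v :: "('a::field_char_0 \<Rightarrow> real) \<Rightarrow> (nat \<Rightarrow> 'a) \<Rightarrow> 'a \<Rightarrow> bool" where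
  "lim_v av s l \<longleftrightarrow> (\<forall>e>0. \<exists>N. \<forall>n\<ge>N. av (s n - l) < e)"

definition is_Cp :: "nat \<Rightarrow> ('a::field_char_0 \<Rightarrow> real) \<Rightarrow> bool" where
  "is_Cp p av \<longleftrightarrow>
     prime p \<and> abs_value_na av \<and> av (of_nat p) = 1 / real p \<and>
     (\<forall>s. cauchy_v av s \<longrightarrow> (\<exists>l. lim_v av s l)) \<and>
     (\<forall>q::'a poly. degree q > 0 \<longrightarrow> (\<exists>z. poly q z = 0)) \<and>
     (\<forall>z. \<forall>e>0. \<exists>w. algebraic w \<and> av (w - z) < e)"

definition Zp :: "('a::field_char_0 \<Rightarrow> real) \<Rightarrow> 'a set" where
  "Zp av = {x. \<exists>s::nat \<Rightarrow> int. lim_v av (\<lambda>n. of_int (s n)) x}"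

definition cont_Zp :: "('a::field_char_0 \<Rightarrow> real) \<Rightarrow> ('a \<Rightarrow> 'a) \<Rightarrow> bool" where
  "cont_Zp av \<phi> \<longleftrightarrow> (\<forall>x\<in>Zp av. \<forall>e>0. \<exists>d>0. \<forall>y\<in>Zp av.
       av (y - x) < d \<longrightarrow> av (\<phi> y - \<phi> x) < e)"

definition sums_v :: "('a::field_char_0 \<Rightarrow> real) \<Rightarrow> (nat \<Rightarrow> 'a) \<Rightarrow> 'a \<Rightarrow> bool" where
  "sums_v av f s \<longleftrightarrow> lim_v av (\<lambda>N. \<Sum>n<N. f n) s"

definition vsum :: "('a::field_char_0 \<Rightarrow> real) \<Rightarrow> (nat \<Rightarrow> 'a) \<Rightarrow> 'a" where
  "vsum av f = (THE s. sums_v av f s)"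

definition nabla :: "('a::field_char_0 \<Rightarrow> 'a) \<Rightarrow> 'a \<Rightarrow> 'a" where
  "nabla \<phi> = (\<lambda>x. \<phi> (x + 1) - \<phi> x)"

definition mahler :: "('a::field_char_0 \<Rightarrow> 'a) \<Rightarrow> nat \<Rightarrow> 'a" where
  "mahler \<phi> n = (nabla ^^ n) \<phi> 0"

definition conv :: "('a::field_char_0 \<Rightarrow> real) \<Rightarrow> ('a \<Rightarrow> 'a) \<Rightarrow> ('a \<Rightarrow> 'a) \<Rightarrow> 'a \<Rightarrow> 'a" where
  "conv av \<phi> \<psi> = (\<lambda>x. vsum av (\<lambda>n.
      (\<Sum>k\<le>n. of_nat (n choose k) * mahler \<phi> k * mahler \<psi> (n - k)) * (x gchoose n)))"

definition S_op :: "('a::field_char_0 \<Rightarrow> real) \<Rightarrow> 'a \<Rightarrow> ('a \<Rightarrow> 'a) \<Rightarrow> 'a \<Rightarrow> 'a" where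
  "S_op av y \<phi> = (\<lambda>x. vsum av (\<lambda>k.
      (-1) ^ k * fact k * (y gchoose k) * (x gchoose k) * \<phi> (x - of_nat k)))"

definition T_op :: "('a::field_char_0 \<Rightarrow> real) \<Rightarrow> 'a \<Rightarrow> ('a \<Rightarrow> 'a) \<Rightarrow> 'a \<Rightarrow> 'a" where
  "T_op av x \<phi> = (\<lambda>y. S_op av y \<phi> x)"

definition one_minus_x_pow :: "('a::field_char_0 \<Rightarrow> real) \<Rightarrow> 'a \<Rightarrow> 'a \<Rightarrow> 'a" where
  "one_minus_x_pow av y = S_op av y (\<lambda>_. 1)"

text \<open>The measure mu_{phi,x}, as the functional chi |-> integral of chi.\<close>
definition mu :: "('a::field_char_0 \<Rightarrow> real) \<Rightarrow> ('a \<Rightarrow> 'a) \<Rightarrow> 'a \<Rightarrow> ('a \<Rightarrow> 'a) \<Rightarrow> 'a" where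
  "mu av \<phi> x = (\<lambda>\<chi>. vsum av (\<lambda>n. mahler \<chi> n * (x gchoose n) * \<phi> (x - of_nat n)))"

end

theory Submission
  imports Defs
begin

locale cp =
  fixes p :: nat and av :: "'a::field_char_0 \<Rightarrow> real"
  assumes isCp: "is_Cp p av"
begin

lemma prime_p: "prime p" using isCp by (simp add: is_Cp_def)
lemma p_gt1: "p > 1" using prime_p prime_gt_1_nat by blast
lemma absv: "abs_value_na av" using isCp by (simp add: is_Cp_def)
lemma av_nonneg[simp]: "av x \<ge> 0" using absv by (simp add: abs_value_na_def)
lemma av_zero_iff[simp]: "av x = 0 \<longleftrightarrow> x = 0" using absv by (simp add: abs_value_na_def)
lemma av_mult: "av (x * y) = av x * av y" using absv by (simp add: abs_value_na_def)
lemma av_add: "av (x + y) \<le> max (av x) (av y)" using absv by (simp add: abs_value_na_def)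
lemma av_p: "av (of_nat p) = 1 / real p" using isCp by (simp add: is_Cp_def)
lemma complete: "cauchy_v av s \<Longrightarrow> \<exists>l. lim_v av s l" using isCp by (simp add: is_Cp_def)

lemma av_0[simp]: "av 0 = 0" by simp
lemma av_1[simp]: "av 1 = 1"
proof -
  have "av 1 = av 1 * av 1" using av_mult[of 1 1] by simp
  moreover have "av 1 \<noteq> 0" by simp
  ultimately show ?thesis by (metis mult_cancel_left1)
qed
lemma av_m1[simp]: "av (-1) = 1"
proof -
  have "av (-1) * av (-1) = 1" using av_mult[of "-1" "-1"] by simp
  then have "(av (-1))^2 = 1" by (simp add: power2_eq_square)
  then show ?thesis using av_nonneg[of "-1"] by (simp add: power2_eq_1_iff)
qed
lemma av_uminus[simp]: "av (- x) = av x"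
  using av_mult[of "-1" x] by simp
lemma av_minus_commute: "av (x - y) = av (y - x)"
  by (metis av_uminus minus_diff_eq)
lemma av_diff: "av (x - y) \<le> max (av x) (av y)"
  using av_add[of x "-y"] by simp
lemma av_power: "av (x ^ n) = av x ^ n"
  by (induction n) (auto simp: av_mult)
lemma av_tri: "av (x - z) \<le> max (av (x - y)) (av (y - z))"
  using av_add[of "x - y" "y - z"] by simp
lemma av_of_nat_le1: "av (of_nat n) \<le> 1"
proof (induction n)
  case (Suc n) then show ?case using av_add[of "of_nat n" 1] by (simp add: add.commute)
qed simp
lemma av_fact_le1: "av (fact n) \<le> 1"
  by (metis av_of_nat_le1 of_nat_fact)
lemma av_sum_le:
  assumes "finite S" "\<And>i. i \<in> S \<Longrightarrow> av (f i) \<le> C" "C \<ge> 0"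
  shows "av (sum f S) \<le> C"
  using assms by (induction S rule: finite_induct) (auto intro: order.trans[OF av_add])
lemma av_sum_less:
  assumes "finite S" "\<And>i. i \<in> S \<Longrightarrow> av (f i) < C" "C > 0"
  shows "av (sum f S) < C"
  using assms by (induction S rule: finite_induct) (auto intro: le_less_trans[OF av_add])
lemma av_pmult: "av (of_nat (p ^ k * m)) \<le> (1 / real p) ^ k"
proof -
  have "av (of_nat (p ^ k * m)) = (1 / real p) ^ k * av (of_nat m)"
    by (simp add: av_mult av_power av_p)
  also have "\<dots> \<le> (1 / real p) ^ k" using av_of_nat_le1[of m]
    by (simp add: mult_left_le)
  finally show ?thesis .
qed
lemma av_pmult_int: "av (of_int (int p ^ k * m)) \<le> (1 / real p) ^ k"
proof -
  have "av (of_int (int p ^ k * m)) = (1 / real p) ^ k * av (of_int m)"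
    by (simp add: av_mult av_power av_p)
  also have "av (of_int m) \<le> 1"
    by (cases "m \<ge> 0") (metis av_of_nat_le1 of_int_of_nat_eq nonneg_int_cases,
        metis av_of_nat_le1 av_uminus of_int_minus of_int_of_nat_eq nonneg_int_cases neg_0_le_iff_le nle_le)
  then have "(1 / real p) ^ k * av (of_int m) \<le> (1 / real p) ^ k"
    by (simp add: mult_left_le)
  finally show ?thesis .
qed
lemma pk_small: "e > 0 \<Longrightarrow> \<exists>k. (1 / real p) ^ k < e"
  using p_gt1 by (intro real_arch_pow_inv) auto
lemma pk_small_ev: "e > 0 \<Longrightarrow> \<exists>K. \<forall>k\<ge>K. (1 / real p) ^ k < e"
proof -
  assume "e > 0" then obtain K where K: "(1 / real p) ^ K < e" using pk_small by blast
  have "(1 / real p) ^ k \<le> (1 / real p) ^ K" if "k \<ge> K" for k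
    using p_gt1 that by (intro power_decreasing) auto
  with K show ?thesis by (meson le_less_trans)
qed


lemma le_of_forall_pos_max: fixes X e :: real
  assumes "\<And>d. d > 0 \<Longrightarrow> X \<le> max d e" "e \<ge> 0" shows "X \<le> e"
proof (rule ccontr)
  assume "\<not> X \<le> e"
  then have "X \<le> max ((X - e)/2) e" using assms(1)[of "(X - e)/2"] by auto
  with \<open>\<not> X \<le> e\<close> assms(2) show False by (simp add: max_def split: if_splits)
qed

lemma lim_v_le:
  assumes "lim_v av s l" "lim_v av t m" "\<And>n. av (s n - t n) \<le> e" "e \<ge> 0"
  shows "av (l - m) \<le> e"
proof (rule le_of_forall_pos_max[OF _ assms(4)])
  fix d :: real assume "d > 0"
  obtain N1 where N1: "\<forall>n\<ge>N1. av (s n - l) < d" using assms(1) \<open>d>0\<close> unfolding lim_v_def by blast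
  obtain N2 where N2: "\<forall>n\<ge>N2. av (t n - m) < d" using assms(2) \<open>d>0\<close> unfolding lim_v_def by blast
  define n where "n = max N1 N2"
  have "av (l - m) \<le> max (av (l - s n)) (av (s n - m))" by (rule av_tri)
  also have "av (s n - m) \<le> max (av (s n - t n)) (av (t n - m))" by (rule av_tri)
  finally have "av (l - m) \<le> max (av (l - s n)) (max (av (s n - t n)) (av (t n - m)))" by simp
  moreover have "av (l - s n) < d" using N1 av_minus_commute[of l "s n"] by (simp add: n_def)
  moreover have "av (t n - m) < d" using N2 by (simp add: n_def)
  ultimately show "av (l - m) \<le> max d e" using assms(3)[of n] by (simp add: max_def split: if_splits)
qed

lemma lim_unique: assumes "lim_v av s l" "lim_v av s m" shows "l = m"
proof -
  have "av (l - m) \<le> 0" using lim_v_le[OF assms, of 0] by simp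
  then have "av (l - m) = 0" using av_nonneg[of "l - m"] by linarith
  then show ?thesis by simp
qed

lemma sums_close:
  assumes "sums_v av f s" "sums_v av g t" "\<And>n. av (f n - g n) \<le> e" "e \<ge> 0"
  shows "av (s - t) \<le> e"
proof -
  have "av ((\<Sum>n<N. f n) - (\<Sum>n<N. g n)) \<le> e" for N
    unfolding sum_subtractf[symmetric] using assms(3,4) by (intro av_sum_le) auto
  then show ?thesis using lim_v_le assms unfolding sums_v_def by blast
qed

lemma sums_zero: "sums_v av (\<lambda>n. 0) 0"
  by (simp add: sums_v_def lim_v_def)

lemma sums_bound:
  assumes "sums_v av f s" "\<And>n. av (f n) \<le> e" "e \<ge> 0"
  shows "av s \<le> e"
  using sums_close[OF assms(1) sums_zero, of e] assms by simp

lemma vsum_eq: assumes "sums_v av f s" shows "vsum av f = s"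
  unfolding vsum_def
  by (rule the_equality[of "sums_v av f", OF assms]) (use assms lim_unique in \<open>auto simp: sums_v_def\<close>)

lemma sum_split_at: "(M::nat) \<le> N \<Longrightarrow> (\<Sum>n<N. f n) = (\<Sum>n<M. f n) + (\<Sum>n\<in>{M..<N}. f n)"
proof -
  assume "M \<le> N"
  then have e: "{..<N} = {..<M} \<union> {M..<N}" by auto
  show ?thesis by (subst e, rule sum.union_disjoint) auto
qed

lemma sums_finite:
  assumes "\<And>n. n \<ge> M \<Longrightarrow> f n = 0"
  shows "sums_v av f (\<Sum>n<M. f n)"
proof -
  have eq: "(\<Sum>n<N. f n) = (\<Sum>n<M. f n)" if "N \<ge> M" for N
  proof -
    have "(\<Sum>n<N. f n) = (\<Sum>n<M. f n) + (\<Sum>n\<in>{M..<N}. f n)"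
      using that by (rule sum_split_at)
    then show ?thesis using assms by simp
  qed
  show ?thesis unfolding sums_v_def lim_v_def
  proof (intro allI impI exI[of _ M])
    fix e :: real and n assume "e > 0" "n \<ge> M"
    show "av ((\<Sum>n<n. f n) - (\<Sum>n<M. f n)) < e" using eq[OF \<open>n \<ge> M\<close>] \<open>e>0\<close> by simp
  qed
qed

lemma series_conv:
  assumes "\<And>e. e > 0 \<Longrightarrow> \<exists>M. \<forall>n\<ge>M. av (f n) < e"
  shows "\<exists>s. sums_v av f s"
proof -
  have "cauchy_v av (\<lambda>N. \<Sum>n<N. f n)"
    unfolding cauchy_v_def
  proof (intro allI impI)
    fix e :: real assume "e > 0"
    then obtain M where M: "\<forall>n\<ge>M. av (f n) < e" using assms by blast
    have "av ((\<Sum>n<a. f n) - (\<Sum>n<b. f n)) < e" if "a \<ge> M" "b \<ge> M" for a b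
    proof (cases "a \<le> b")
      case True
      have "{..<b} = {..<a} \<union> {a..<b}" using True by auto
      have "(\<Sum>n<b. f n) = (\<Sum>n<a. f n) + (\<Sum>n\<in>{a..<b}. f n)"
        using True by (rule sum_split_at)
      moreover have "av (\<Sum>n\<in>{a..<b}. f n) < e" using M that \<open>e>0\<close> by (intro av_sum_less) auto
      ultimately show ?thesis by (simp add: av_minus_commute[of "sum f {..<a}"])
    next
      case False
      have "{..<a} = {..<b} \<union> {b..<a}" using False by auto
      have "(\<Sum>n<a. f n) = (\<Sum>n<b. f n) + (\<Sum>n\<in>{b..<a}. f n)"
        using False by (intro sum_split_at) simp
      moreover have "av (\<Sum>n\<in>{b..<a}. f n) < e" using M that \<open>e>0\<close> by (intro av_sum_less) auto
      ultimately show ?thesis by simp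
    qed
    then show "\<exists>N. \<forall>m\<ge>N. \<forall>n\<ge>N. av ((\<Sum>n<m. f n) - (\<Sum>n<n. f n)) < e" by blast
  qed
  then show ?thesis using complete unfolding sums_v_def by blast
qed

end

context cp begin

lemma Zp_of_nat: "of_nat n \<in> Zp av"
  unfolding Zp_def by (rule CollectI, rule exI[of _ "\<lambda>_. int n"]) (simp add: lim_v_def)

lemma Zp_diff_nat: assumes "x \<in> Zp av" shows "x - of_nat n \<in> Zp av"
proof -
  obtain s where s: "lim_v av (\<lambda>j. of_int (s j)) x" using assms unfolding Zp_def by blast
  have "lim_v av (\<lambda>j. of_int (s j - int n)) (x - of_nat n)"
    using s unfolding lim_v_def by (simp add: algebra_simps)
  then show ?thesis unfolding Zp_def by (intro CollectI exI[of _ "\<lambda>j. s j - int n"])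
qed

lemma approx_nat:
  assumes "x \<in> Zp av" "d > 0"
  shows "\<exists>N::nat. av (of_nat N - x) < d"
proof -
  obtain s where s: "lim_v av (\<lambda>j. of_int (s j)) x" using assms unfolding Zp_def by blast
  obtain j where j: "av (of_int (s j) - x) < d" using s assms(2) unfolding lim_v_def by blast
  obtain k where k: "(1 / real p) ^ k < d" using pk_small assms(2) by blast
  define t where "t = s j"
  define N where "N = nat (t + int p ^ k * \<bar>t\<bar>)"
  have "int p ^ k \<ge> 1" using p_gt1 by simp
  then have nn: "t + int p ^ k * \<bar>t\<bar> \<ge> 0"
    using mult_right_mono[OF \<open>1 \<le> int p ^ k\<close>, of "\<bar>t\<bar>"] by simp
  have "(of_nat N :: 'a) = of_int (t + int p ^ k * \<bar>t\<bar>)"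
    unfolding N_def using nn by (metis of_int_of_nat_eq nat_0_le)
  then have "of_nat N - x = (of_int t - x) + of_int (int p ^ k * \<bar>t\<bar>)" by simp
  then have "av (of_nat N - x) \<le> max (av (of_int t - x)) (av (of_int (int p ^ k * \<bar>t\<bar>) :: 'a))"
    using av_add[of "of_int t - x" "of_int (int p ^ k * \<bar>t\<bar>)"] by (simp only:)
  moreover have "av (of_int (int p ^ k * \<bar>t\<bar>) :: 'a) < d" using av_pmult_int k by (meson le_less_trans)
  moreover have "av (of_int t - x) < d" using j t_def by simp
  ultimately have "av (of_nat N - x) < d" by (meson le_less_trans max_less_iff_conj)
  then show ?thesis by blast
qed

lemma Zp_le1: assumes "x \<in> Zp av" shows "av x \<le> 1"
proof -
  obtain N :: nat where N: "av (of_nat N - x) < 1" using approx_nat[OF assms, of 1] by auto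
  have "av x \<le> max (av (x - of_nat N)) (av (of_nat N :: 'a))" using av_add[of "x - of_nat N" "of_nat N"] by simp
  then show ?thesis using N av_of_nat_le1[of N] av_minus_commute[of x "of_nat N"] by auto
qed

lemma av_le1_diff_nat: "av u \<le> 1 \<Longrightarrow> av (u - of_nat i) \<le> 1"
  using av_diff[of u "of_nat i"] av_of_nat_le1[of i] by auto

lemma prod_diff:
  assumes "av u \<le> 1" "av v \<le> 1"
  shows "av ((\<Prod>i=0..<n. u - of_nat i) - (\<Prod>i=0..<n. v - of_nat i)) \<le> av (u - v)"
proof (induction n)
  case 0 then show ?case by simp
next
  case (Suc n)
  define A where "A = (\<Prod>i=0..<n. u - of_nat i)"
  define B where "B = (\<Prod>i=0..<n. v - of_nat i)"
  have Bl: "av B \<le> 1" unfolding B_def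
    by (induction n) (auto simp: av_mult intro!: mult_le_one av_le1_diff_nat assms)
  have eq: "A * (u - of_nat n) - B * (v - of_nat n) = A * (u - v) + (A - B) * (v - of_nat n)"
    by (simp add: algebra_simps)
  have Al: "av A \<le> 1" unfolding A_def
    by (induction n) (auto simp: av_mult intro!: mult_le_one av_le1_diff_nat assms)
  have "av (A * (u - v)) \<le> av (u - v)" using Al by (simp add: av_mult mult_left_le_one_le)
  moreover have "av ((A - B) * (v - of_nat n)) \<le> av (u - v)"
  proof -
    have "av (A - B) \<le> av (u - v)" using Suc.IH unfolding A_def B_def .
    moreover have "av ((A - B) * (v - of_nat n)) \<le> av (A - B)"
      using av_le1_diff_nat[OF assms(2), of n] by (simp add: av_mult mult_left_le)
    ultimately show ?thesis by linarith
  qed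
  ultimately have "av (A * (u - of_nat n) - B * (v - of_nat n)) \<le> av (u - v)"
    using eq av_add[of "A * (u - v)" "(A - B) * (v - of_nat n)"] by auto
  then show ?case by (simp add: A_def B_def)
qed

lemma gchoose_diff:
  assumes "av u \<le> 1" "av v \<le> 1"
  shows "av (fact n) * av ((u gchoose n) - (v gchoose n)) \<le> av (u - v)"
proof -
  have "fact n * ((u gchoose n) - (v gchoose n)) = (\<Prod>i=0..<n. u - of_nat i) - (\<Prod>i=0..<n. v - of_nat i)"
    by (simp add: right_diff_distrib gbinomial_mult_fact)
  then have "av (fact n * ((u gchoose n) - (v gchoose n))) \<le> av (u - v)" using prod_diff[OF assms, of n] by simp
  then show ?thesis by (simp add: av_mult)
qed

lemma gchoose_le1: assumes "x \<in> Zp av" shows "av (x gchoose n) \<le> 1"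
proof -
  have "(fact n :: 'a) \<noteq> 0" by simp
  then have fp: "av (fact n :: 'a) > 0" using av_nonneg[of "fact n"] av_zero_iff[of "fact n"] by linarith
  obtain N :: nat where N: "av (of_nat N - x) < av (fact n :: 'a)"
    using approx_nat[OF assms fp] by auto
  have "av (fact n :: 'a) * av ((of_nat N gchoose n) - (x gchoose n)) \<le> av (of_nat N - x)"
    using gchoose_diff[OF av_of_nat_le1 Zp_le1[OF assms]] by blast
  also have "\<dots> < av (fact n :: 'a) * 1" using N by simp
  finally have d: "av ((of_nat N gchoose n) - (x gchoose n)) < 1"
    using fp mult_less_cancel_left_pos by blast
  have "av (x gchoose n) \<le> max (av ((of_nat N gchoose n) - (x gchoose n))) (av (of_nat N gchoose n :: 'a))"
    using av_diff[of "of_nat N gchoose n" "(of_nat N gchoose n) - (x gchoose n)"] by simp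
  moreover have "av (of_nat N gchoose n :: 'a) \<le> 1"
    by (metis binomial_gbinomial av_of_nat_le1)
  ultimately show ?thesis using d by auto
qed

lemma av_fact_small: "av (fact n :: 'a) \<le> (1 / real p) ^ (n div p)"
proof (induction n)
  case 0 then show ?case by simp
next
  case (Suc n)
  show ?case
  proof (cases "Suc n mod p = 0")
    case True
    then obtain q where q: "Suc n = p ^ 1 * q" by auto
    have "av (of_nat (Suc n) :: 'a) \<le> (1 / real p) ^ 1" using av_pmult[of 1 q] q by simp
    then have "av (of_nat (Suc n) :: 'a) * av (fact n :: 'a) \<le> (1 / real p) * (1 / real p) ^ (n div p)"
      using Suc by (intro mult_mono) auto
    then have "av (fact (Suc n) :: 'a) \<le> (1 / real p) * (1 / real p) ^ (n div p)"
      by (simp only: fact_Suc av_mult)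
    then show ?thesis using True by (simp add: div_Suc)
  next
    case False
    have "av (of_nat (Suc n) :: 'a) * av (fact n :: 'a) \<le> 1 * (1 / real p) ^ (n div p)"
      using Suc av_of_nat_le1[of "Suc n"] by (intro mult_mono) auto
    then have "av (fact (Suc n) :: 'a) \<le> 1 * (1 / real p) ^ (n div p)"
      by (simp only: fact_Suc av_mult)
    then show ?thesis using False by (simp add: div_Suc)
  qed
qed

lemma av_fact_tendsto: "e > 0 \<Longrightarrow> \<exists>M. \<forall>n\<ge>M. av (fact n :: 'a) < e"
proof -
  assume "e > 0"
  then obtain K where K: "\<forall>k\<ge>K. (1 / real p) ^ k < e" using pk_small_ev by blast
  have "av (fact n :: 'a) < e" if "n \<ge> K * p" for n
  proof -
    have "n div p \<ge> K" using div_le_mono[OF that, of p] p_gt1 by simp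
    then show ?thesis using K av_fact_small[of n] by (meson le_less_trans)
  qed
  then show ?thesis by blast
qed

end


definition Df :: "(nat \<Rightarrow> 'a::field_char_0) \<Rightarrow> nat \<Rightarrow> 'a" where
  "Df u = (\<lambda>N. u (Suc N) - u N)"
definition Uf :: "(nat \<Rightarrow> 'a::field_char_0) \<Rightarrow> nat \<Rightarrow> 'a" where
  "Uf a = (\<lambda>N. \<Sum>m\<le>N. of_nat (N choose m) * a m)"

lemma Df_apply: "Df u N = u (Suc N) - u N" by (simp add: Df_def)

lemma nabla_nat:
  assumes "\<And>N. f (of_nat N) = u N"
  shows "(nabla ^^ n) f (of_nat N) = (Df ^^ n) u N"
  using assms
proof (induction n arbitrary: f u N)
  case 0 then show ?case by simp
next
  case (Suc n)
  have "nabla f (of_nat N) = Df u N" for N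
    using Suc.prems[of N] Suc.prems[of "Suc N"] by (simp add: nabla_def Df_def add.commute)
  then have "(nabla ^^ n) (nabla f) (of_nat N) = (Df ^^ n) (Df u) N" by (rule Suc.IH)
  then show ?case by (simp only: funpow_Suc_right o_def)
qed

lemma mahler_nat: "mahler f n = (Df ^^ n) (\<lambda>N. f (of_nat N)) 0"
  unfolding mahler_def using nabla_nat[of f "\<lambda>N. f (of_nat N)" n 0] by simp

lemma Uf_ext: "K \<ge> N \<Longrightarrow> Uf a N = (\<Sum>m\<le>K. of_nat (N choose m) * a m)"
proof -
  assume "K \<ge> N"
  have "(\<Sum>m\<le>K. of_nat (N choose m) * a m) = (\<Sum>m\<le>N. of_nat (N choose m) * a m)"
    by (rule sum.mono_neutral_right) (use \<open>K \<ge> N\<close> in auto)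
  then show ?thesis by (simp add: Uf_def)
qed

lemma Df_Uf: "Df (Uf a) = Uf (\<lambda>m. a (Suc m))"
proof
  fix N
  have "Uf a (Suc N) = (\<Sum>m\<le>Suc N. of_nat (Suc N choose m) * a m)" by (simp add: Uf_def)
  also have "\<dots> = a 0 + (\<Sum>m\<le>N. of_nat (Suc N choose Suc m) * a (Suc m))"
    by (subst sum.atMost_Suc_shift) simp
  also have "\<dots> = a 0 + (\<Sum>m\<le>N. of_nat (N choose m) * a (Suc m)) + (\<Sum>m\<le>N. of_nat (N choose Suc m) * a (Suc m))"
    by (simp add: sum.distrib algebra_simps)
  finally have 1: "Uf a (Suc N) = a 0 + (\<Sum>m\<le>N. of_nat (N choose m) * a (Suc m)) + (\<Sum>m\<le>N. of_nat (N choose Suc m) * a (Suc m))" .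
  have "Uf a N = (\<Sum>m\<le>Suc N. of_nat (N choose m) * a m)" by (rule Uf_ext) simp
  also have "\<dots> = a 0 + (\<Sum>m\<le>N. of_nat (N choose Suc m) * a (Suc m))"
    by (subst sum.atMost_Suc_shift) simp
  finally have 2: "Uf a N = a 0 + (\<Sum>m\<le>N. of_nat (N choose Suc m) * a (Suc m))" .
  show "Df (Uf a) N = Uf (\<lambda>m. a (Suc m)) N"
    unfolding Df_def using 1 2 by (simp add: Uf_def)
qed

lemma Dpow_Uf: "(Df ^^ j) (Uf a) = Uf (\<lambda>m. a (m + j))"
proof (induction j arbitrary: a)
  case 0 then show ?case by simp
next
  case (Suc j)
  have "(Df ^^ Suc j) (Uf a) = (Df ^^ j) (Uf (\<lambda>m. a (Suc m)))"
    by (simp only: funpow_Suc_right o_def Df_Uf)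
  also have "\<dots> = Uf (\<lambda>m. a (m + Suc j))" by (simp add: Suc.IH)
  finally show ?case .
qed

lemma Uf_0: "Uf a 0 = a 0" by (simp add: Uf_def)

lemma Dpow_Uf_0: "(Df ^^ j) (Uf a) 0 = a j"
  by (simp add: Dpow_Uf Uf_0)

lemma Uf_inv: "u N = Uf (\<lambda>m. (Df ^^ m) u 0) N"
proof (induction N arbitrary: u)
  case 0 then show ?case by (simp add: Uf_0)
next
  case (Suc N)
  define b where "b = (\<lambda>m. (Df ^^ m) u 0)"
  have b': "(\<lambda>m. (Df ^^ m) (Df u) 0) = (\<lambda>m. b (Suc m))"
    unfolding b_def by (simp only: funpow_Suc_right o_def)
  have "u (Suc N) = u N + Df u N" by (simp add: Df_def)
  also have "\<dots> = Uf b N + Uf (\<lambda>m. b (Suc m)) N" using Suc.IH[of u] Suc.IH[of "Df u"] b' b_def by simp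
  also have "\<dots> = Uf b (Suc N)"
  proof -
    have "Uf b (Suc N) - Uf b N = Uf (\<lambda>m. b (Suc m)) N" using fun_cong[OF Df_Uf[of b], of N] by (simp add: Df_def)
    then show ?thesis by (metis add.commute diff_add_cancel)
  qed
  finally show ?case by (simp add: b_def)
qed

lemma Dpow_shift: "(Df ^^ m) (\<lambda>j. u (j + K)) = (\<lambda>j. (Df ^^ m) u (j + K))"
  by (induction m) (simp_all add: Df_def)

lemma Dpow_diff: "(Df ^^ m) (\<lambda>j. u j - v j) = (\<lambda>j. (Df ^^ m) u j - (Df ^^ m) v j)"
  by (induction m) (simp_all add: Df_def algebra_simps)

lemma newton_shift: "u (N + n) = (\<Sum>m\<le>n. of_nat (n choose m) * (Df ^^ m) u N)"
proof -
  have "u (N + n) = (\<lambda>j. u (j + N)) n" by (simp add: add.commute)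
  also have "\<dots> = Uf (\<lambda>m. (Df ^^ m) (\<lambda>j. u (j + N)) 0) n" by (rule Uf_inv)
  also have "\<dots> = (\<Sum>m\<le>n. of_nat (n choose m) * (Df ^^ m) u N)"
    by (simp add: Uf_def Dpow_shift)
  finally show ?thesis .
qed

lemma prime_power_dvd_choose:
  assumes "prime (p::nat)" "0 < m" "m < p ^ k"
  shows "p dvd (p ^ k choose m)"
proof (rule ccontr)
  assume nd: "\<not> p dvd (p ^ k choose m)"
  have pk: "p ^ k > 0" using assms prime_gt_0_nat by simp
  obtain n where n: "p ^ k = Suc n" using pk by (metis gr0_implies_Suc)
  obtain l where l: "m = Suc l" using assms(2) by (metis gr0_implies_Suc)
  have "p ^ k * (n choose l) = (p ^ k choose m) * m"
    using Suc_times_binomial_eq[of n l] n l by simp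
  then have "p ^ k dvd (p ^ k choose m) * m" by (metis dvd_triv_left)
  moreover have "coprime (p ^ k) (p ^ k choose m)"
    using nd assms(1) by (simp add: prime_imp_coprime coprime_power_left_iff)
  ultimately have "p ^ k dvd m" using coprime_dvd_mult_right_iff by blast
  then show False using assms(2,3) by (simp add: nat_dvd_not_less)
qed

context cp begin

lemma Dpow_bound:
  assumes "\<And>N. av (u N) \<le> C"
  shows "av ((Df ^^ m) u N) \<le> C"
proof (induction m arbitrary: N)
  case 0 then show ?case using assms by simp
next
  case (Suc m)
  have "max (av ((Df ^^ m) u (Suc N))) (av ((Df ^^ m) u N)) \<le> C" using Suc.IH by simp
  then have "av ((Df ^^ m) u (Suc N) - (Df ^^ m) u N) \<le> C"
    using av_diff[of "(Df ^^ m) u (Suc N)" "(Df ^^ m) u N"] by linarith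
  then show ?case unfolding funpow.simps(2) o_apply Df_apply .
qed

lemma av_choose_pk:
  assumes "0 < m" "m < p ^ k"
  shows "av (of_nat (p ^ k choose m) :: 'a) \<le> 1 / real p"
proof -
  obtain q where "p ^ k choose m = p ^ 1 * q"
    using prime_power_dvd_choose[OF prime_p assms] by auto
  then show ?thesis using av_pmult[of 1 q] by simp
qed

lemma Dpow_pk:
  assumes C: "\<And>N. av (u N) \<le> C" and E: "\<And>N. av (u (N + p ^ k) - u N) \<le> e"
    and "C \<ge> 0" "e \<ge> 0"
  shows "av ((Df ^^ (p ^ k)) u N) \<le> max e (C / real p)"
proof -
  define n where "n = p ^ k"
  have n1: "n \<ge> 1" using p_gt1 by (simp add: n_def)
  have split: "{..n} = insert 0 (insert n {1..<n})" using n1 by auto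
  have "u (N + n) = (\<Sum>m\<le>n. of_nat (n choose m) * (Df ^^ m) u N)" by (rule newton_shift)
  also have "\<dots> = u N + (Df ^^ n) u N + (\<Sum>m\<in>{1..<n}. of_nat (n choose m) * (Df ^^ m) u N)"
    unfolding split using n1 by (simp add: sum.insert)
  finally have eq: "(Df ^^ n) u N = (u (N + n) - u N) - (\<Sum>m\<in>{1..<n}. of_nat (n choose m) * (Df ^^ m) u N)"
    by (simp add: algebra_simps)
  have "av (\<Sum>m\<in>{1..<n}. of_nat (n choose m) * (Df ^^ m) u N) \<le> C / real p"
  proof (rule av_sum_le)
    fix m assume "m \<in> {1..<n}"
    then have "av (of_nat (n choose m) :: 'a) \<le> 1 / real p" unfolding n_def by (intro av_choose_pk) auto
    moreover have "av ((Df ^^ m) u N) \<le> C" by (rule Dpow_bound[OF C])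
    ultimately have "av (of_nat (n choose m) :: 'a) * av ((Df ^^ m) u N) \<le> 1 / real p * C"
      by (intro mult_mono) auto
    then show "av (of_nat (n choose m) * (Df ^^ m) u N) \<le> C / real p" by (simp add: av_mult)
  qed (use \<open>C \<ge> 0\<close> in auto)
  moreover have "av (u (N + n) - u N) \<le> e" using E by (simp add: n_def)
  ultimately show ?thesis unfolding eq n_def[symmetric]
    using av_diff[of "u (N + n) - u N" "\<Sum>m\<in>{1..<n}. of_nat (n choose m) * (Df ^^ m) u N"]
    by auto
qed

lemma mahler_decay:
  assumes B: "\<And>N. av (u N) \<le> B" and "B \<ge> 0"
    and UC: "\<And>e. e > 0 \<Longrightarrow> \<exists>k. \<forall>N. av (u (N + p ^ k) - u N) \<le> e"
    and "e > 0"
  shows "\<exists>J. \<forall>j\<ge>J. av ((Df ^^ j) u 0) \<le> e"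
proof -
  obtain k where k: "\<And>N. av (u (N + p ^ k) - u N) \<le> e" using UC \<open>e > 0\<close> by blast
  have main: "av ((Df ^^ (t * p ^ k)) u N) \<le> max e (B * (1 / real p) ^ t)" for t N
  proof (induction t arbitrary: N)
    case 0 then show ?case using B[of N] by (simp add: le_max_iff_disj)
  next
    case (Suc t)
    define g where "g = (Df ^^ (t * p ^ k)) u"
    have gs: "av (g (N + p ^ k) - g N) \<le> e" for N
    proof -
      have "g (N + p ^ k) - g N = (Df ^^ (t * p ^ k)) (\<lambda>j. u (j + p ^ k) - u j) N"
        unfolding g_def Dpow_diff Dpow_shift by simp
      also have "av \<dots> \<le> e" by (rule Dpow_bound) (use k in simp)
      finally show ?thesis .
    qed
    have "(Df ^^ (Suc t * p ^ k)) u = (Df ^^ (p ^ k)) g"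
      unfolding g_def by (simp add: funpow_add)
    moreover have "av ((Df ^^ (p ^ k)) g N) \<le> max e (max e (B * (1 / real p) ^ t) / real p)"
      by (rule Dpow_pk[where u=g and k=k and e=e, OF _ gs]) (use Suc.IH g_def \<open>e > 0\<close> in auto)
    moreover have "max e (max e (B * (1 / real p) ^ t) / real p) \<le> max e (B * (1 / real p) ^ Suc t)"
      using p_gt1 \<open>e > 0\<close> by (auto simp: max_def divide_simps)
    ultimately show ?case by simp
  qed
  obtain t where t: "(1 / real p) ^ t < e / (B + 1)"
    using pk_small[of "e / (B + 1)"] \<open>e > 0\<close> \<open>B \<ge> 0\<close> by auto
  have "B * (1 / real p) ^ t \<le> e"
  proof -
    have "B * (1 / real p) ^ t \<le> (B + 1) * (1 / real p) ^ t" by (intro mult_right_mono) auto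
    also have "\<dots> \<le> (B + 1) * (e / (B + 1))" using t \<open>B \<ge> 0\<close> by (intro mult_left_mono) auto
    also have "\<dots> = e" using \<open>B \<ge> 0\<close> by simp
    finally show ?thesis .
  qed
  then have mt: "av ((Df ^^ (t * p ^ k)) u N) \<le> e" for N using main[of t N] by simp
  have "av ((Df ^^ j) u 0) \<le> e" if "j \<ge> t * p ^ k" for j
  proof -
    have "(Df ^^ j) u = (Df ^^ (j - t * p ^ k)) ((Df ^^ (t * p ^ k)) u)"
    proof -
      have "j = (j - t * p ^ k) + t * p ^ k" using that by simp
      then have "(Df ^^ j) u = (Df ^^ ((j - t * p ^ k) + t * p ^ k)) u" by simp
      then show ?thesis by (simp only: funpow_add o_apply)
    qed
    then show ?thesis using Dpow_bound[of "(Df ^^ (t * p ^ k)) u" e, OF mt] by simp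
  qed
  then show ?thesis by blast
qed

end

context cp begin

lemma av_nat_diff_dvd:
  assumes "a mod p ^ j = b mod p ^ j"
  shows "av (of_nat a - of_nat b :: 'a) \<le> (1 / real p) ^ j"
proof -
  have "int p ^ j dvd (int a - int b)"
  proof -
    have "int a mod int (p ^ j) = int b mod int (p ^ j)" using assms by (simp only: of_nat_mod[symmetric])
    then have "int a mod int p ^ j = int b mod int p ^ j" by simp
    then show ?thesis using mod_eq_dvd_iff by blast
  qed
  then obtain q where q: "int a - int b = int p ^ j * q" by blast
  have "(of_nat a - of_nat b :: 'a) = of_int (int a - int b)" by simp
  also have "\<dots> = of_int (int p ^ j * q)" using q by simp
  finally show ?thesis using av_pmult_int[of j q] by simp
qed

lemma seq_compact:
  fixes n :: "nat \<Rightarrow> nat"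
  shows "\<exists>r x. strict_mono r \<and> lim_v av (\<lambda>i. of_nat (n (r i))) x \<and> x \<in> Zp av"
proof -
  define Inf where "Inf c j \<longleftrightarrow> infinite {k. n k mod p ^ j = c}" for c j
  have step: "\<exists>c'. c' mod p ^ j = c \<and> Inf c' (Suc j)" if "Inf c j" for c j
  proof (rule ccontr)
    assume "\<not> ?thesis"
    then have fin: "finite {k. n k mod p ^ Suc j = c'}" if "c' mod p ^ j = c" for c'
      using that unfolding Inf_def by blast
    have "{k. n k mod p ^ j = c} \<subseteq> (\<Union>c'\<in>{c'. c' < p ^ Suc j \<and> c' mod p ^ j = c}. {k. n k mod p ^ Suc j = c'})"
    proof
      fix k assume "k \<in> {k. n k mod p ^ j = c}"
      then have "n k mod p ^ Suc j mod p ^ j = c"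
        by (simp add: mod_mod_cancel le_imp_power_dvd)
      moreover have "n k mod p ^ Suc j < p ^ Suc j" using p_gt1 by simp
      ultimately show "k \<in> (\<Union>c'\<in>{c'. c' < p ^ Suc j \<and> c' mod p ^ j = c}. {k. n k mod p ^ Suc j = c'})"
        by blast
    qed
    moreover have "finite (\<Union>c'\<in>{c'. c' < p ^ Suc j \<and> c' mod p ^ j = c}. {k. n k mod p ^ Suc j = c'})"
      using fin by (intro finite_UN_I) auto
    ultimately have "finite {k. n k mod p ^ j = c}" by (rule finite_subset)
    then show False using that unfolding Inf_def by simp
  qed
  define cs where "cs = rec_nat 0 (\<lambda>j c. SOME c'. c' mod p ^ j = c \<and> Inf c' (Suc j))"
  have cs0: "cs 0 = 0" by (simp add: cs_def)
  have csS: "cs (Suc j) = (SOME c'. c' mod p ^ j = cs j \<and> Inf c' (Suc j))" for j by (simp add: cs_def)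
  have csI: "Inf (cs j) j \<and> (\<forall>i. j = Suc i \<longrightarrow> cs j mod p ^ i = cs i)" for j
  proof (induction j)
    case 0 then show ?case by (simp add: cs0 Inf_def)
  next
    case (Suc j)
    then have "\<exists>c'. c' mod p ^ j = cs j \<and> Inf c' (Suc j)" using step by blast
    then have "cs (Suc j) mod p ^ j = cs j \<and> Inf (cs (Suc j)) (Suc j)"
      unfolding csS by (rule someI_ex)
    then show ?case by simp
  qed
  have csmod: "cs i mod p ^ j = cs j" if "j \<le> i" for i j
    using that
  proof (induction i)
    case 0 then show ?case by (simp add: cs0)
  next
    case (Suc i)
    show ?case
    proof (cases "j = Suc i")
      case True
      have "cs j < p ^ j"
      proof -
        have "Inf (cs j) j" using csI by blast
        then obtain k where "n k mod p ^ j = cs j" unfolding Inf_def using not_finite_existsD by blast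
        moreover have "p ^ j > 0" using p_gt1 by simp
        ultimately show ?thesis by (metis mod_less_divisor)
      qed
      then show ?thesis using True by simp
    next
      case False
      then have "j \<le> i" using Suc.prems by simp
      have "cs (Suc i) mod p ^ j = cs (Suc i) mod p ^ i mod p ^ j"
        using \<open>j \<le> i\<close> by (simp add: mod_mod_cancel le_imp_power_dvd)
      also have "\<dots> = cs i mod p ^ j" using csI[of "Suc i"] by simp
      also have "\<dots> = cs j" using Suc.IH \<open>j \<le> i\<close> by simp
      finally show ?thesis .
    qed
  qed
  have ex: "\<exists>k. k > m \<and> n k mod p ^ j = cs j" for m j
  proof -
    have "infinite {k. n k mod p ^ j = cs j}" using csI unfolding Inf_def by blast
    then show ?thesis unfolding infinite_nat_iff_unbounded by blast
  qed
  define r where "r = rec_nat (SOME k. k > 0 \<and> n k mod p ^ 0 = cs 0) (\<lambda>j rj. SOME k. k > rj \<and> n k mod p ^ Suc j = cs (Suc j))"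
  have r0: "r 0 = (SOME k. k > 0 \<and> n k mod p ^ 0 = cs 0)" by (simp add: r_def)
  have rS: "r (Suc j) = (SOME k. k > r j \<and> n k mod p ^ Suc j = cs (Suc j))" for j by (simp add: r_def)
  have rprop: "n (r j) mod p ^ j = cs j" for j
  proof (cases j)
    case 0 then show ?thesis using someI_ex[OF ex[of 0 0]] r0 by simp
  next
    case (Suc i) then show ?thesis using someI_ex[OF ex[of "r i" "Suc i"]] rS by simp
  qed
  have "r j < r (Suc j)" for j using someI_ex[OF ex[of "r j" "Suc j"]] rS by simp
  then have sm: "strict_mono r" by (simp add: strict_mono_Suc_iff)
  have cong: "n (r i) mod p ^ j = n (r j) mod p ^ j" if "j \<le> i" for i j
  proof -
    have "n (r i) mod p ^ j = n (r i) mod p ^ i mod p ^ j"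
      using that by (simp add: mod_mod_cancel le_imp_power_dvd)
    also have "\<dots> = cs i mod p ^ j" using rprop by simp
    also have "\<dots> = cs j" using csmod that by simp
    finally show ?thesis using rprop by simp
  qed
  have "cauchy_v av (\<lambda>i. of_nat (n (r i)))"
    unfolding cauchy_v_def
  proof (intro allI impI)
    fix e :: real assume "e > 0"
    then obtain K where K: "(1 / real p) ^ K < e" using pk_small by blast
    have "av (of_nat (n (r a)) - of_nat (n (r b)) :: 'a) < e" if "a \<ge> K" "b \<ge> K" for a b
    proof -
      have "n (r a) mod p ^ K = n (r b) mod p ^ K" using cong[OF that(1)] cong[OF that(2)] by simp
      then show ?thesis using av_nat_diff_dvd K by (meson le_less_trans)
    qed
    then show "\<exists>N. \<forall>m\<ge>N. \<forall>n'\<ge>N. av (of_nat (n (r m)) - of_nat (n (r n')) :: 'a) < e" by blast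
  qed
  then obtain x where x: "lim_v av (\<lambda>i. of_nat (n (r i))) x" using complete by blast
  have "x \<in> Zp av" unfolding Zp_def
    by (rule CollectI, rule exI[of _ "\<lambda>i. int (n (r i))"]) (use x in simp)
  then show ?thesis using sm x by blast
qed

lemma unif_cont:
  assumes "cont_Zp av \<phi>" "e > 0"
  shows "\<exists>k. \<forall>N. av (\<phi> (of_nat (N + p ^ k)) - \<phi> (of_nat N)) < e"
proof (rule ccontr)
  assume "\<not> ?thesis"
  then have "\<forall>k. \<exists>N. av (\<phi> (of_nat (N + p ^ k)) - \<phi> (of_nat N)) \<ge> e" by (meson not_less)
  then obtain n where n: "\<And>k. av (\<phi> (of_nat (n k + p ^ k)) - \<phi> (of_nat (n k))) \<ge> e" by metis
  obtain r x where sm: "strict_mono r" and x: "lim_v av (\<lambda>i. of_nat (n (r i))) x" and xZ: "x \<in> Zp av"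
    using seq_compact[of n] by blast
  obtain d where d: "d > 0" "\<forall>y\<in>Zp av. av (y - x) < d \<longrightarrow> av (\<phi> y - \<phi> x) < e"
    using assms(1) xZ \<open>e > 0\<close> unfolding cont_Zp_def by blast
  obtain i0 where i0: "\<forall>i\<ge>i0. av (of_nat (n (r i)) - x) < d" using x d(1) unfolding lim_v_def by blast
  obtain K where K: "\<forall>k\<ge>K. (1 / real p) ^ k < d" using pk_small_ev d(1) by blast
  define i where "i = max i0 K"
  have ri: "r i \<ge> K" using seq_suble[OF sm, of i] i_def by simp
  define y1 :: 'a where "y1 = of_nat (n (r i))"
  define y2 :: 'a where "y2 = of_nat (n (r i) + p ^ r i)"
  have y1: "av (y1 - x) < d" using i0 i_def y1_def by simp
  have eqy: "y2 - x = (y1 - x) + of_nat (p ^ r i * 1)" by (simp add: y1_def y2_def)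
  have sm2: "av (of_nat (p ^ r i * 1) :: 'a) < d" using av_pmult[of "r i" 1] K ri by (meson le_less_trans)
  have "av (y2 - x) \<le> max (av (y1 - x)) (av (of_nat (p ^ r i * 1) :: 'a))" unfolding eqy by (rule av_add)
  then have y2: "av (y2 - x) < d" using y1 sm2 by (meson le_less_trans max_less_iff_conj)
  have "av (\<phi> y1 - \<phi> x) < e" using d(2) y1 Zp_of_nat y1_def by blast
  moreover have "av (\<phi> y2 - \<phi> x) < e" using d(2) y2 Zp_of_nat y2_def by blast
  ultimately have "av (\<phi> y2 - \<phi> y1) < e"
    using av_tri[of "\<phi> y2" "\<phi> y1" "\<phi> x"] av_minus_commute[of "\<phi> y1" "\<phi> x"] by simp
  then show False using n[of "r i"] y1_def y2_def by simp
qed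

lemma bounded_nat:
  assumes "cont_Zp av \<phi>"
  shows "\<exists>B. \<forall>N. av (\<phi> (of_nat N)) \<le> B"
proof (rule ccontr)
  assume "\<not> ?thesis"
  then have "\<forall>k::nat. \<exists>N. av (\<phi> (of_nat N)) > real k" by (meson not_le)
  then obtain n where n: "\<And>k. av (\<phi> (of_nat (n k))) > real k" by metis
  obtain r x where sm: "strict_mono r" and x: "lim_v av (\<lambda>i. of_nat (n (r i))) x" and xZ: "x \<in> Zp av"
    using seq_compact[of n] by blast
  obtain d where d: "d > 0" "\<forall>y\<in>Zp av. av (y - x) < d \<longrightarrow> av (\<phi> y - \<phi> x) < 1"
    using assms(1) xZ unfolding cont_Zp_def by (meson zero_less_one)
  obtain i0 where i0: "\<forall>i\<ge>i0. av (of_nat (n (r i)) - x) < d" using x d(1) unfolding lim_v_def by blast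
  define i where "i = max i0 (nat \<lceil>av (\<phi> x) + 1\<rceil>)"
  have ri: "real (r i) \<ge> av (\<phi> x) + 1"
  proof -
    have "r i \<ge> i" using seq_suble[OF sm] by blast
    then have "real (r i) \<ge> real (nat \<lceil>av (\<phi> x) + 1\<rceil>)" unfolding i_def by simp
    then show ?thesis by linarith
  qed
  have "av (\<phi> (of_nat (n (r i))) - \<phi> x) < 1" using d(2) i0 i_def Zp_of_nat by simp
  then have "max (av (\<phi> (of_nat (n (r i))) - \<phi> x)) (av (\<phi> x)) < av (\<phi> x) + 1"
    using av_nonneg[of "\<phi> x"] by (simp only: max_less_iff_conj) linarith
  then have "av (\<phi> (of_nat (n (r i)))) < av (\<phi> x) + 1"
    using av_add[of "\<phi> (of_nat (n (r i))) - \<phi> x" "\<phi> x"] by simp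
  then show False using n[of "r i"] ri by simp
qed

lemma bounded_Zp:
  assumes "cont_Zp av \<phi>"
  shows "\<exists>B\<ge>1. \<forall>z\<in>Zp av. av (\<phi> z) \<le> B"
proof -
  obtain B where B: "\<And>N. av (\<phi> (of_nat N)) \<le> B" using bounded_nat[OF assms] by blast
  have "av (\<phi> z) \<le> max 1 B" if z: "z \<in> Zp av" for z
  proof -
    obtain d where d: "d > 0" "\<forall>y\<in>Zp av. av (y - z) < d \<longrightarrow> av (\<phi> y - \<phi> z) < 1"
      using assms(1) z unfolding cont_Zp_def by (meson zero_less_one)
    obtain N :: nat where N: "av (of_nat N - z) < d" using approx_nat[OF z d(1)] by blast
    have "av (\<phi> (of_nat N) - \<phi> z) < 1" using d(2) N Zp_of_nat by blast
    then have "av (\<phi> z - \<phi> (of_nat N)) < 1" by (simp add: av_minus_commute)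
    then show ?thesis
      using av_add[of "\<phi> z - \<phi> (of_nat N)" "\<phi> (of_nat N)"] B[of N] by simp
  qed
  then show ?thesis by (intro exI[of _ "max 1 B"]) auto
qed

end


lemma Uf_conv:
  fixes a b :: "nat \<Rightarrow> 'a::field_char_0"
  shows "Uf (\<lambda>m. \<Sum>k\<le>m. of_nat (m choose k) * a k * b (m - k)) N
       = (\<Sum>k\<le>N. of_nat (N choose k) * a k * Uf b (N - k))"
proof -
  define f where "f i j = of_nat (N choose i) * of_nat ((N - i) choose j) * a i * b j" for i j
  have "Uf (\<lambda>m. \<Sum>k\<le>m. of_nat (m choose k) * a k * b (m - k)) N
      = (\<Sum>m\<le>N. \<Sum>k\<le>m. of_nat (N choose m) * (of_nat (m choose k) * a k * b (m - k)))"
    by (simp add: Uf_def sum_distrib_left)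
  also have "\<dots> = (\<Sum>m\<le>N. \<Sum>k\<le>m. f k (m - k))"
  proof (intro sum.cong refl)
    fix m k assume "m \<in> {..N}" "k \<in> {..m}"
    then have "(N choose m) * (m choose k) = (N choose k) * ((N - k) choose (m - k))"
      by (intro choose_mult) auto
    then have "(of_nat (N choose m) * of_nat (m choose k) :: 'a) = of_nat (N choose k) * of_nat ((N - k) choose (m - k))"
      by (metis of_nat_mult)
    then show "of_nat (N choose m) * (of_nat (m choose k) * a k * b (m - k)) = f k (m - k)"
      unfolding f_def by (metis (no_types, lifting) mult.assoc)
  qed
  also have "\<dots> = (\<Sum>(i,j)\<in>{(i,j). i + j \<le> N}. f i j)"
    by (rule sum.triangle_reindex_eq[symmetric])
  also have "{(i,j). i + j \<le> N} = (SIGMA i:{..N}. {..N - i})" by auto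
  also have "(\<Sum>(i,j)\<in>(SIGMA i:{..N}. {..N - i}). f i j) = (\<Sum>i\<le>N. \<Sum>j\<le>N - i. f i j)"
    by (rule sum.Sigma[symmetric]) auto
  also have "\<dots> = (\<Sum>k\<le>N. of_nat (N choose k) * a k * Uf b (N - k))"
    by (simp add: Uf_def f_def sum_distrib_left mult_ac)
  finally show ?thesis .
qed

definition near :: "('a::field_char_0 \<Rightarrow> real) \<Rightarrow> 'a \<Rightarrow> (nat \<Rightarrow> bool) \<Rightarrow> bool" where
  "near av x P \<longleftrightarrow> (\<exists>d>0. \<forall>N. av (of_nat N - x) < d \<longrightarrow> P N)"

lemma near_conj: "near av x P \<Longrightarrow> near av x Q \<Longrightarrow> near av x (\<lambda>N. P N \<and> Q N)"
  unfolding near_def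
proof (elim exE conjE)
  fix d1 d2 :: real
  assume "d1 > 0" "\<forall>N. av (of_nat N - x) < d1 \<longrightarrow> P N" "d2 > 0" "\<forall>N. av (of_nat N - x) < d2 \<longrightarrow> Q N"
  then show "\<exists>d>0. \<forall>N. av (of_nat N - x) < d \<longrightarrow> P N \<and> Q N"
    by (intro exI[of _ "min d1 d2"]) auto
qed

lemma near_ball: "(\<And>n. n < (M::nat) \<Longrightarrow> near av x (P n)) \<Longrightarrow> near av x (\<lambda>N. \<forall>n<M. P n N)"
proof (induction M)
  case 0 then show ?case by (auto simp: near_def intro: exI[of _ 1])
next
  case (Suc M)
  have "near av x (\<lambda>N. (\<forall>n<M. P n N) \<and> P M N)"
    using Suc by (intro near_conj) auto
  then show ?case unfolding near_def by (metis less_Suc_eq)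
qed

context cp begin

lemma near_ex: "x \<in> Zp av \<Longrightarrow> near av x P \<Longrightarrow> \<exists>N. P N"
  unfolding near_def using approx_nat by blast

lemma gchoose_nat_zero: "N < k \<Longrightarrow> (of_nat N gchoose k :: 'a) = 0"
  by (simp add: binomial_gbinomial[symmetric])

lemma omx_nat:
  "(\<lambda>N. one_minus_x_pow av y (of_nat N)) = Uf (\<lambda>n. (-1) ^ n * fact n * (y gchoose n))"
proof
  fix N
  define t where "t k = (-1) ^ k * fact k * (y gchoose k) * (of_nat N gchoose k) * (1::'a)" for k
  have "sums_v av t (\<Sum>k<Suc N. t k)"
    by (rule sums_finite) (simp add: t_def gchoose_nat_zero)
  then have "one_minus_x_pow av y (of_nat N) = (\<Sum>k<Suc N. t k)"
    unfolding one_minus_x_pow_def S_op_def t_def by (rule vsum_eq)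
  also have "\<dots> = Uf (\<lambda>n. (-1) ^ n * fact n * (y gchoose n)) N"
    unfolding Uf_def t_def lessThan_Suc_atMost by (simp add: binomial_gbinomial mult_ac)
  finally show "one_minus_x_pow av y (of_nat N) = Uf (\<lambda>n. (-1) ^ n * fact n * (y gchoose n)) N" .
qed

lemma mahler_omx: "mahler (one_minus_x_pow av y) n = (-1) ^ n * fact n * (y gchoose n)"
  unfolding mahler_nat omx_nat by (rule Dpow_Uf_0)

lemma part1: "T_op av x \<phi> y = mu av \<phi> x (one_minus_x_pow av y)"
  unfolding T_op_def S_op_def mu_def mahler_omx by simp

lemma le_zero_of_forall: fixes X :: real
  assumes "\<And>e. e > 0 \<Longrightarrow> X \<le> e" shows "X \<le> 0"
  using assms[of "X / 2"] by (cases "X > 0") auto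

lemma part2:
  assumes phi: "cont_Zp av \<phi>" and xZ: "x \<in> Zp av" and yZ: "y \<in> Zp av"
  shows "mu av \<phi> x (one_minus_x_pow av y) = conv av (one_minus_x_pow av y) \<phi> x"
proof -
  define a where "a n = (-1) ^ n * fact n * (y gchoose n)" for n
  define u where "u N = \<phi> (of_nat N)" for N
  define b where "b j = mahler \<phi> j" for j
  define c where "c m = (\<Sum>k\<le>m. of_nat (m choose k) * a k * b (m - k))" for m
  have b_D: "b j = (Df ^^ j) u 0" for j unfolding b_def mahler_nat u_def ..
  have conv_eq: "conv av (one_minus_x_pow av y) \<phi> x = vsum av (\<lambda>n. c n * (x gchoose n))"
    unfolding conv_def c_def mahler_omx a_def b_def ..
  have mu_eq: "mu av \<phi> x (one_minus_x_pow av y) = vsum av (\<lambda>n. a n * (x gchoose n) * \<phi> (x - of_nat n))"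
    unfolding mu_def mahler_omx a_def ..
  obtain Bp where Bp1: "Bp \<ge> 1" and Bp: "\<And>z. z \<in> Zp av \<Longrightarrow> av (\<phi> z) \<le> Bp"
    using bounded_Zp[OF phi] by blast
  have ha: "av (a n) \<le> av (fact n :: 'a)" for n
  proof -
    have "av (a n) = av (fact n :: 'a) * av (y gchoose n)" by (simp add: a_def av_mult av_power)
    also have "\<dots> \<le> av (fact n :: 'a) * 1" using gchoose_le1[OF yZ] by (intro mult_left_mono) auto
    finally show ?thesis by simp
  qed
  have ha1: "av (a n) \<le> 1" for n using ha[of n] av_fact_le1[of n] by linarith
  have ha0: "\<exists>M. \<forall>n\<ge>M. av (a n) < e" if "e > 0" for e
    using av_fact_tendsto[OF that] ha by (meson le_less_trans)
  have ub: "av (u N) \<le> Bp" for N unfolding u_def by (rule Bp[OF Zp_of_nat])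
  have hb: "av (b j) \<le> Bp" for j unfolding b_D by (rule Dpow_bound[OF ub])
  have hb0: "\<exists>J. \<forall>j\<ge>J. av (b j) \<le> e" if "e > 0" for e
  proof -
    have UC: "\<exists>k. \<forall>N. av (u (N + p ^ k) - u N) \<le> e'" if "e' > 0" for e'
      using unif_cont[OF phi that] unfolding u_def by (meson less_imp_le)
    show ?thesis unfolding b_D using mahler_decay[OF ub _ UC that] Bp1 by simp
  qed
  have hc: "av (c m) \<le> Bp" for m
    unfolding c_def
  proof (rule av_sum_le)
    fix k assume "k \<in> {..m}"
    have "av (of_nat (m choose k) * a k * b (m - k)) = av (of_nat (m choose k) :: 'a) * av (a k) * av (b (m - k))"
      by (simp add: av_mult)
    also have "\<dots> \<le> 1 * 1 * Bp"
      using av_of_nat_le1 ha1 hb by (intro mult_mono) auto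
    finally show "av (of_nat (m choose k) * a k * b (m - k)) \<le> Bp" by simp
  qed (use Bp1 in auto)
  have hc0: "\<exists>M. \<forall>m\<ge>M. av (c m) \<le> e" if ep: "e > 0" for e
  proof -
    obtain K where K: "\<And>k. k \<ge> K \<Longrightarrow> av (a k) < e / Bp" using ha0[of "e / Bp"] ep Bp1 by auto
    obtain J where J: "\<And>j. j \<ge> J \<Longrightarrow> av (b j) \<le> e" using hb0[OF ep] by auto
    have "av (c m) \<le> e" if m: "m \<ge> K + J" for m
      unfolding c_def
    proof (rule av_sum_le)
      fix k assume k: "k \<in> {..m}"
      have eq: "av (of_nat (m choose k) * a k * b (m - k)) = av (of_nat (m choose k) :: 'a) * av (a k) * av (b (m - k))"
        by (simp add: av_mult)
      show "av (of_nat (m choose k) * a k * b (m - k)) \<le> e"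
      proof (cases "k \<ge> K")
        case True
        have "av (of_nat (m choose k) :: 'a) * av (a k) * av (b (m - k)) \<le> 1 * (e / Bp) * Bp"
          using av_of_nat_le1 K[OF True] hb ep Bp1 by (intro mult_mono) (auto intro: less_imp_le)
        then show ?thesis using eq Bp1 by simp
      next
        case False
        then have "m - k \<ge> J" using m by simp
        then have "av (of_nat (m choose k) :: 'a) * av (a k) * av (b (m - k)) \<le> 1 * 1 * e"
          using av_of_nat_le1 ha1 J by (intro mult_mono) auto
        then show ?thesis using eq by simp
      qed
    qed (use ep in auto)
    then show ?thesis by blast
  qed
  define tL where "tL z n = a n * (z gchoose n) * \<phi> (z - of_nat n)" for z n
  define tR where "tR z n = c n * (z gchoose n)" for z n
  have tLb: "av (tL z n) \<le> av (a n) * Bp" if "z \<in> Zp av" for z n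
  proof -
    have "av (tL z n) = av (a n) * av (z gchoose n) * av (\<phi> (z - of_nat n))" by (simp add: tL_def av_mult)
    also have "\<dots> \<le> av (a n) * 1 * Bp"
      using gchoose_le1[OF that] Bp[OF Zp_diff_nat[OF that]] by (intro mult_mono) auto
    finally show ?thesis by simp
  qed
  have tRb: "av (tR z n) \<le> av (c n)" if "z \<in> Zp av" for z n
  proof -
    have "av (tR z n) = av (c n) * av (z gchoose n)" by (simp add: tR_def av_mult)
    also have "\<dots> \<le> av (c n) * 1" using gchoose_le1[OF that] by (intro mult_left_mono) auto
    finally show ?thesis by simp
  qed
  obtain SL where SL: "sums_v av (tL x) SL"
  proof -
    have "\<exists>s. sums_v av (tL x) s"
    proof (rule series_conv)
      fix e :: real assume "e > 0"
      then obtain M where M: "\<And>n. n \<ge> M \<Longrightarrow> av (a n) < e / Bp" using ha0[of "e / Bp"] Bp1 by auto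
      have "av (tL x n) < e" if "n \<ge> M" for n
      proof -
        have "av (a n) * Bp < e / Bp * Bp" using M[OF that] Bp1 by (intro mult_strict_right_mono) auto
        then show ?thesis using tLb[OF xZ, of n] Bp1 by simp
      qed
      then show "\<exists>M. \<forall>n\<ge>M. av (tL x n) < e" by blast
    qed
    then show ?thesis using that by blast
  qed
  obtain SR where SR: "sums_v av (tR x) SR"
  proof -
    have "\<exists>s. sums_v av (tR x) s"
    proof (rule series_conv)
      fix e :: real assume "e > 0"
      then obtain M where M: "\<And>n. n \<ge> M \<Longrightarrow> av (c n) \<le> e / 2" using hc0[of "e / 2"] by auto
      have "av (tR x n) < e" if "n \<ge> M" for n using M[OF that] tRb[OF xZ, of n] \<open>e > 0\<close> by simp
      then show "\<exists>M. \<forall>n\<ge>M. av (tR x n) < e" by blast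
    qed
    then show ?thesis using that by blast
  qed
  have muSL: "mu av \<phi> x (one_minus_x_pow av y) = SL"
  proof -
    have "(\<lambda>n. a n * (x gchoose n) * \<phi> (x - of_nat n)) = tL x" by (rule ext) (simp add: tL_def)
    then show ?thesis unfolding mu_eq using vsum_eq[OF SL] by simp
  qed
  have convSR: "conv av (one_minus_x_pow av y) \<phi> x = SR"
  proof -
    have "(\<lambda>n. c n * (x gchoose n)) = tR x" by (rule ext) (simp add: tR_def)
    then show ?thesis unfolding conv_eq using vsum_eq[OF SR] by simp
  qed
  \<comment> \<open>finite identity at naturals\<close>
  have finL: "sums_v av (tL (of_nat N)) (\<Sum>n<Suc N. tL (of_nat N) n)" for N
    by (rule sums_finite) (simp add: tL_def gchoose_nat_zero)
  have finR: "sums_v av (tR (of_nat N)) (\<Sum>n<Suc N. tR (of_nat N) n)" for N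
    by (rule sums_finite) (simp add: tR_def gchoose_nat_zero)
  have finEq: "(\<Sum>n<Suc N. tL (of_nat N) n) = (\<Sum>n<Suc N. tR (of_nat N) n)" for N
  proof -
    have "(\<Sum>n<Suc N. tR (of_nat N) n) = Uf c N"
      unfolding tR_def Uf_def lessThan_Suc_atMost by (simp add: binomial_gbinomial mult_ac)
    also have "\<dots> = (\<Sum>k\<le>N. of_nat (N choose k) * a k * Uf b (N - k))"
      unfolding c_def by (rule Uf_conv)
    also have "\<dots> = (\<Sum>n<Suc N. tL (of_nat N) n)"
      unfolding lessThan_Suc_atMost
    proof (intro sum.cong refl)
      fix k assume "k \<in> {..N}"
      then have kN: "k \<le> N" by simp
      have "Uf b (N - k) = u (N - k)" unfolding b_D by (rule Uf_inv[symmetric])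
      also have "\<dots> = \<phi> (of_nat N - of_nat k)" using kN by (simp add: u_def of_nat_diff)
      finally show "of_nat (N choose k) * a k * Uf b (N - k) = tL (of_nat N) k"
        unfolding tL_def by (simp add: binomial_gbinomial mult_ac)
    qed
    finally show ?thesis ..
  qed
  have nearG: "near av x (\<lambda>N. av ((x gchoose n) - (of_nat N gchoose n)) * Bp \<le> e)" if "e > 0" for n e
  proof -
    have fp: "av (fact n :: 'a) > 0"
    proof -
      have "(fact n :: 'a) \<noteq> 0" by simp
      then show ?thesis using av_nonneg[of "fact n :: 'a"] av_zero_iff[of "fact n :: 'a"] by linarith
    qed
    show ?thesis unfolding near_def
    proof (intro exI[of _ "av (fact n :: 'a) * e / Bp"] conjI allI impI)
      show "av (fact n :: 'a) * e / Bp > 0" using fp that Bp1 by simp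
      fix N assume N: "av (of_nat N - x) < av (fact n :: 'a) * e / Bp"
      have "av (fact n :: 'a) * av ((of_nat N gchoose n) - (x gchoose n)) \<le> av (of_nat N - x)"
        by (rule gchoose_diff[OF av_of_nat_le1 Zp_le1[OF xZ]])
      also have "\<dots> < av (fact n :: 'a) * (e / Bp)" using N by simp
      finally have "av ((of_nat N gchoose n) - (x gchoose n)) < e / Bp"
        using fp mult_less_cancel_left_pos by blast
      then have "av ((x gchoose n) - (of_nat N gchoose n)) < e / Bp"
        by (simp add: av_minus_commute)
      then have "av ((x gchoose n) - (of_nat N gchoose n)) * Bp < e / Bp * Bp"
        using Bp1 by (intro mult_strict_right_mono) auto
      then show "av ((x gchoose n) - (of_nat N gchoose n)) * Bp \<le> e" using Bp1 by simp
    qed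
  qed
  have nearF: "near av x (\<lambda>N. av (\<phi> (x - of_nat n) - \<phi> (of_nat N - of_nat n)) < e)" if ep: "e > 0" for n e
  proof -
    have xn: "x - of_nat n \<in> Zp av" by (rule Zp_diff_nat[OF xZ])
    obtain d where d: "d > 0" "\<forall>w\<in>Zp av. av (w - (x - of_nat n)) < d \<longrightarrow> av (\<phi> w - \<phi> (x - of_nat n)) < e"
      using phi xn ep unfolding cont_Zp_def by blast
    show ?thesis unfolding near_def
    proof (intro exI[of _ d] conjI allI impI)
      show "d > 0" by (rule d(1))
      fix N assume N: "av (of_nat N - x) < d"
      have w: "of_nat N - of_nat n \<in> Zp av" by (rule Zp_diff_nat[OF Zp_of_nat])
      have "(of_nat N - of_nat n) - (x - of_nat n) = (of_nat N - x :: 'a)" by simp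
      then have "av (\<phi> (of_nat N - of_nat n) - \<phi> (x - of_nat n)) < e" using d(2) w N by metis
      then show "av (\<phi> (x - of_nat n) - \<phi> (of_nat N - of_nat n)) < e" by (simp add: av_minus_commute)
    qed
  qed
  have nearT: "near av x (\<lambda>N. av (tL x n - tL (of_nat N) n) \<le> e \<and> av (tR x n - tR (of_nat N) n) \<le> e)"
    if "e > 0" for n e
  proof -
    have "near av x (\<lambda>N. av ((x gchoose n) - (of_nat N gchoose n)) * Bp \<le> e \<and>
                        av (\<phi> (x - of_nat n) - \<phi> (of_nat N - of_nat n)) < e)"
      using nearG[OF that] nearF[OF that] by (rule near_conj)
    moreover have "av (tL x n - tL (of_nat N) n) \<le> e \<and> av (tR x n - tR (of_nat N) n) \<le> e"
      if G: "av ((x gchoose n) - (of_nat N gchoose n)) * Bp \<le> e"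
        and Fd: "av (\<phi> (x - of_nat n) - \<phi> (of_nat N - of_nat n)) < e" for N
    proof
      define Gx Gn Fx Fn where "Gx = x gchoose n" and "Gn = (of_nat N gchoose n :: 'a)"
        and "Fx = \<phi> (x - of_nat n)" and "Fn = \<phi> (of_nat N - of_nat n)"
      have Gx1: "av Gx \<le> 1" unfolding Gx_def by (rule gchoose_le1[OF xZ])
      have Fn1: "av Fn \<le> Bp" unfolding Fn_def by (rule Bp[OF Zp_diff_nat[OF Zp_of_nat]])
      have "tL x n - tL (of_nat N) n = a n * (Gx * (Fx - Fn) + (Gx - Gn) * Fn)"
        by (simp add: tL_def Gx_def Gn_def Fx_def Fn_def algebra_simps)
      then have "av (tL x n - tL (of_nat N) n) = av (a n) * av (Gx * (Fx - Fn) + (Gx - Gn) * Fn)"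
        by (simp add: av_mult)
      also have "\<dots> \<le> 1 * av (Gx * (Fx - Fn) + (Gx - Gn) * Fn)"
        using ha1 by (intro mult_right_mono) auto
      also have "\<dots> \<le> e"
      proof -
        have "av (Gx * (Fx - Fn)) \<le> 1 * e"
          unfolding av_mult using Gx1 Fd Fx_def Fn_def by (intro mult_mono) auto
        moreover have "av ((Gx - Gn) * Fn) \<le> e"
        proof -
          have "av ((Gx - Gn) * Fn) \<le> av (Gx - Gn) * Bp"
            unfolding av_mult using Fn1 by (intro mult_left_mono) auto
          then show ?thesis using G Gx_def Gn_def by simp
        qed
        ultimately show ?thesis using av_add[of "Gx * (Fx - Fn)" "(Gx - Gn) * Fn"] by simp
      qed
      finally show "av (tL x n - tL (of_nat N) n) \<le> e" .
      have "av (tR x n - tR (of_nat N) n) = av (c n) * av ((x gchoose n) - (of_nat N gchoose n))"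
        by (simp add: tR_def av_mult right_diff_distrib[symmetric])
      also have "\<dots> \<le> Bp * av ((x gchoose n) - (of_nat N gchoose n))"
        using hc by (intro mult_right_mono) auto
      finally show "av (tR x n - tR (of_nat N) n) \<le> e" using G by (simp add: mult.commute)
    qed
    ultimately show ?thesis unfolding near_def by blast
  qed
  \<comment> \<open>density argument\<close>
  have "av (SL - SR) \<le> e" if ep: "e > 0" for e
  proof -
    obtain M1 where M1: "\<And>n. n \<ge> M1 \<Longrightarrow> av (a n) < e / Bp" using ha0[of "e / Bp"] ep Bp1 by auto
    obtain M2 where M2: "\<And>n. n \<ge> M2 \<Longrightarrow> av (c n) \<le> e" using hc0[OF ep] by auto
    define M where "M = max M1 M2"
    have "near av x (\<lambda>N. \<forall>n<M. av (tL x n - tL (of_nat N) n) \<le> e \<and> av (tR x n - tR (of_nat N) n) \<le> e)"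
      by (rule near_ball) (rule nearT[OF ep])
    then obtain N where N: "\<And>n. n < M \<Longrightarrow> av (tL x n - tL (of_nat N) n) \<le> e \<and> av (tR x n - tR (of_nat N) n) \<le> e"
      using near_ex[OF xZ] by blast
    have aBp: "av (a n) * Bp \<le> e" if "n \<ge> M" for n
    proof -
      have "av (a n) * Bp \<le> e / Bp * Bp" using M1[of n] that Bp1 unfolding M_def
        by (intro mult_right_mono) auto
      then show ?thesis using Bp1 by simp
    qed
    have dL: "av (tL x n - tL (of_nat N) n) \<le> e" for n
    proof (cases "n < M")
      case True then show ?thesis using N by blast
    next
      case False
      then have "av (tL x n) \<le> e" "av (tL (of_nat N) n) \<le> e"
        using tLb[OF xZ, of n] tLb[OF Zp_of_nat, of N n] aBp[of n] by auto
      then show ?thesis using av_diff[of "tL x n" "tL (of_nat N) n"] by simp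
    qed
    have dR: "av (tR x n - tR (of_nat N) n) \<le> e" for n
    proof (cases "n < M")
      case True then show ?thesis using N by blast
    next
      case False
      then have "av (c n) \<le> e" using M2 unfolding M_def by simp
      then have "av (tR x n) \<le> e" "av (tR (of_nat N) n) \<le> e"
        using tRb[OF xZ, of n] tRb[OF Zp_of_nat, of N n] by auto
      then show ?thesis using av_diff[of "tR x n" "tR (of_nat N) n"] by simp
    qed
    have "av (SL - (\<Sum>n<Suc N. tL (of_nat N) n)) \<le> e"
      by (rule sums_close[OF SL finL dL]) (use ep in simp)
    moreover have "av (SR - (\<Sum>n<Suc N. tR (of_nat N) n)) \<le> e"
      by (rule sums_close[OF SR finR dR]) (use ep in simp)
    ultimately show ?thesis
      using av_tri[of SL SR "\<Sum>n<Suc N. tL (of_nat N) n"] finEq[of N]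
        av_minus_commute[of SR "\<Sum>n<Suc N. tR (of_nat N) n"] by simp
  qed
  then have "av (SL - SR) \<le> 0" by (rule le_zero_of_forall)
  then have "av (SL - SR) = 0" using av_nonneg[of "SL - SR"] by linarith
  then have "SL = SR" by simp
  then show ?thesis using muSL convSR by simp
qed

end



theorem proposition6p8:
  fixes p :: nat and av :: "'a::field_char_0 \<Rightarrow> real"
    and \<phi> :: "'a \<Rightarrow> 'a" and x y :: 'a
  assumes "is_Cp p av"
    and "cont_Zp av \<phi>"
    and "x \<in> Zp av" and "y \<in> Zp av"
  shows "T_op av x \<phi> y = mu av \<phi> x (one_minus_x_pow av y)
       \<and> mu av \<phi> x (one_minus_x_pow av y) = conv av (one_minus_x_pow av y) \<phi> x"
proof -
  interpret cp p av using assms(1) by unfold_locales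
  show ?thesis using part1 part2[OF assms(2,3,4)] by simp
qed

end
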